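(* Let $U$ be a Hilbert space, $T: U\rightrightarrows U$, $(\hat u,\hat w)\in\operatorname{graph}T$, and $\Xi,N,M\in\mathcal{L}(U;U)$ with $M\ge\Xi\ge0$. If $(\Xi, M-\Xi)\in\mathcal{P}(T^{-1}(\hat w),\hat u)$, then $(N,\Xi)$-strong submonotonicity of $T$ at $(\hat u,\hat w)$ implies $(\Xi,N,M)$-partial strong submonotonicity of $T$ at $(\hat u,\hat w)$. If $T^{-1}(\hat w)=\{\hat u\}$ is a singleton, these two properties are equivalent (and $(\Xi,M-\Xi)\in\mathcal{P}(T^{-1}(\hat w),\hat u)$ holds).
   Context: For $T\in\mathcal{L}(U;U)$: $\langle x,z\rangle_T:=\langle Tx,z\rangle$, $\|x\|^2_T:=\langle Tx,x\rangle$, $\operatorname{dist}^2_T(z,A):=\inf_{u\in A}\|z-u\|^2_T$; $T\ge S$ means $T-S$ positive semidefinite. For $\Xi,N,M\in\mathcal{L}(U;U)$ with $M\ge0$, $T$ is $(\Xi,N,M)$-partially strongly submonotone at $(\hat u,\hat w)$ if there is a neighbourhood $\mathcal{U}\ni\hat u$ with $\inf_{u^*\in T^{-1}(\hat w)}(\langle w-\hat w,u-u^*\rangle_N + \|u-u^*\|^2_{M-\Xi}) \ge \operatorname{dist}^2_M(u,T^{-1}(\hat w))$ for all $u\in\mathcal{U}$, $w\in T(u)$. $T$ is $(N,M)$-strongly submonotone if it is $(M,N,M)$-partially strongly submonotone. For $M,M'\in\mathcal{L}(U;U)$, $A\subset U$ and $\hat u\in A$, one writes $(M,M')\in\mathcal{P}(A,\hat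 u)$ if there is a neighbourhood $\mathcal{U}'\ni\hat u$ such that each $u\in\mathcal{U}'$ has a common projection onto $A$ with respect to $\|\cdot\|_M$ and $\|\cdot\|_{M'}$, i.e. some $u^*\in A$ minimises both $\|u-\cdot\|_M$ and $\|u-\cdot\|_{M'}$ over $A$. *)

theory Defs
  imports "HOL-Analysis.Analysis"
begin

definition sqnorm_op :: "('a::real_inner \<Rightarrow> 'a) \<Rightarrow> 'a \<Rightarrow> real" where
  "sqnorm_op T x = inner (T x) x"

definition inner_op :: "('a::real_inner \<Rightarrow> 'a) \<Rightarrow> 'a \<Rightarrow> 'a \<Rightarrow> real" where
  "inner_op T x z = inner (T x) z"

definition dist2_op :: "('a::real_inner \<Rightarrow> 'a) \<Rightarrow> 'a \<Rightarrow> 'a set \<Rightarrow> real" where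
  "dist2_op T z A = (INF u\<in>A. sqnorm_op T (z - u))"

definition psd_op :: "('a::real_inner \<Rightarrow> 'a) \<Rightarrow> bool" where
  "psd_op T \<longleftrightarrow> (\<forall>x. 0 \<le> inner (T x) x)"

definition op_ge :: "('a::real_inner \<Rightarrow> 'a) \<Rightarrow> ('a \<Rightarrow> 'a) \<Rightarrow> bool" where
  "op_ge T S \<longleftrightarrow> psd_op (\<lambda>x. T x - S x)"

definition inv_img :: "('a \<Rightarrow> 'b set) \<Rightarrow> 'b \<Rightarrow> 'a set" where
  "inv_img T w = {u. w \<in> T u}"

text \<open>(Xi,N,M)-partial strong submonotonicity at (uh,wh); the inequality
  inf_{u*} (...) \<ge> d is written as: for all u*, (...) \<ge> d.\<close>
definition partially_strongly_submonotone ::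
  "('a::real_inner \<Rightarrow> 'a) \<Rightarrow> ('a \<Rightarrow> 'a) \<Rightarrow> ('a \<Rightarrow> 'a) \<Rightarrow> ('a \<Rightarrow> 'a set) \<Rightarrow> 'a \<Rightarrow> 'a \<Rightarrow> bool" where
  "partially_strongly_submonotone Xi N M T uh wh \<longleftrightarrow>
     (\<exists>S. open S \<and> uh \<in> S \<and>
        (\<forall>u\<in>S. \<forall>w\<in>T u. \<forall>us\<in>inv_img T wh.
            inner_op N (w - wh) (u - us) + sqnorm_op (\<lambda>x. M x - Xi x) (u - us)
              \<ge> dist2_op M u (inv_img T wh)))"

definition strongly_submonotone ::
  "('a::real_inner \<Rightarrow> 'a) \<Rightarrow> ('a \<Rightarrow> 'a) \<Rightarrow> ('a \<Rightarrow> 'a set) \<Rightarrow> 'a \<Rightarrow> 'a \<Rightarrow> bool" where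
  "strongly_submonotone N M T uh wh \<longleftrightarrow> partially_strongly_submonotone M N M T uh wh"

definition common_proj ::
  "('a::real_inner \<Rightarrow> 'a) \<Rightarrow> ('a \<Rightarrow> 'a) \<Rightarrow> 'a set \<Rightarrow> 'a \<Rightarrow> bool" where
  "common_proj M M' A uh \<longleftrightarrow>
     (\<exists>S. open S \<and> uh \<in> S \<and>
        (\<forall>u\<in>S. \<exists>us\<in>A.
            (\<forall>v\<in>A. sqnorm_op M (u - us) \<le> sqnorm_op M (u - v)) \<and>
            (\<forall>v\<in>A. sqnorm_op M' (u - us) \<le> sqnorm_op M' (u - v))))"

end

theory Submission
  imports Defs
begin

lemma sq_split: "sqnorm_op M x = sqnorm_op Xi x + sqnorm_op (\<lambda>x. M x - Xi x) x"
  by (simp add: sqnorm_op_def inner_diff_left)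

lemma sq_zero: "sqnorm_op (\<lambda>x. Xi x - Xi x) x = 0"
  by (simp add: sqnorm_op_def)

lemma dist2_single: "dist2_op T u {a} = sqnorm_op T (u - a)"
  by (simp add: dist2_op_def)

lemma part1:
  assumes ge: "op_ge M Xi" and ps: "psd_op Xi"
    and cp: "common_proj Xi (\<lambda>x. M x - Xi x) A uh"
    and ss: "partially_strongly_submonotone Xi N Xi T uh wh"
    and A: "A = inv_img T wh"
  shows "partially_strongly_submonotone Xi N M T uh wh"
proof -
  obtain S1 where S1: "open S1" "uh \<in> S1"
    "\<forall>u\<in>S1. \<forall>w\<in>T u. \<forall>us\<in>inv_img T wh.
       inner_op N (w - wh) (u - us) + sqnorm_op (\<lambda>x. Xi x - Xi x) (u - us)
         \<ge> dist2_op Xi u (inv_img T wh)"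
    using ss unfolding partially_strongly_submonotone_def by blast
  obtain S2 where S2: "open S2" "uh \<in> S2"
    "\<forall>u\<in>S2. \<exists>us\<in>A.
            (\<forall>v\<in>A. sqnorm_op Xi (u - us) \<le> sqnorm_op Xi (u - v)) \<and>
            (\<forall>v\<in>A. sqnorm_op (\<lambda>x. M x - Xi x) (u - us) \<le> sqnorm_op (\<lambda>x. M x - Xi x) (u - v))"
    using cp unfolding common_proj_def by blast
  have Mpos: "\<And>x. 0 \<le> sqnorm_op M x"
  proof -
    fix x
    have "0 \<le> sqnorm_op Xi x" using ps by (simp add: psd_op_def sqnorm_op_def)
    moreover have "0 \<le> sqnorm_op (\<lambda>x. M x - Xi x) x"
      using ge by (simp add: op_ge_def psd_op_def sqnorm_op_def)
    ultimately show "0 \<le> sqnorm_op M x" using sq_split[of M x Xi] by linarith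
  qed
  show ?thesis unfolding partially_strongly_submonotone_def
  proof (intro exI[of _ "S1 \<inter> S2"] conjI ballI)
    show "open (S1 \<inter> S2)" using S1 S2 by auto
    show "uh \<in> S1 \<inter> S2" using S1 S2 by auto
    fix u w us assume u: "u \<in> S1 \<inter> S2" and w: "w \<in> T u" and us: "us \<in> inv_img T wh"
    obtain p where p: "p \<in> A" "\<forall>v\<in>A. sqnorm_op Xi (u - p) \<le> sqnorm_op Xi (u - v)"
      "\<forall>v\<in>A. sqnorm_op (\<lambda>x. M x - Xi x) (u - p) \<le> sqnorm_op (\<lambda>x. M x - Xi x) (u - v)"
      using S2(3) u by blast
    have h1: "inner_op N (w - wh) (u - us) \<ge> dist2_op Xi u A"
      using S1(3) u w us A sq_zero[of Xi] by fastforce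
    have h2: "dist2_op Xi u A \<ge> sqnorm_op Xi (u - p)"
      unfolding dist2_op_def using p by (intro cINF_greatest) auto
    have h3: "sqnorm_op (\<lambda>x. M x - Xi x) (u - us) \<ge> sqnorm_op (\<lambda>x. M x - Xi x) (u - p)"
      using p us A by auto
    have h4: "dist2_op M u A \<le> sqnorm_op M (u - p)"
      unfolding dist2_op_def using p Mpos
      by (intro cINF_lower) (auto intro!: bdd_belowI[where m=0])
    show "inner_op N (w - wh) (u - us) + sqnorm_op (\<lambda>x. M x - Xi x) (u - us)
         \<ge> dist2_op M u (inv_img T wh)"
      using h1 h2 h3 h4 sq_split[of M "u - p" Xi] unfolding A[symmetric] by linarith
  qed
qed

theorem proposition4p3:
  fixes T :: "'a::{real_inner, complete_space} \<Rightarrow> 'a set"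
    and Xi N M :: "'a \<Rightarrow> 'a" and uh wh :: 'a
  assumes "bounded_linear Xi" and "bounded_linear N" and "bounded_linear M"
    and "op_ge M Xi" and "psd_op Xi"
    and "wh \<in> T uh"
  shows "(common_proj Xi (\<lambda>x. M x - Xi x) (inv_img T wh) uh \<longrightarrow>
            strongly_submonotone N Xi T uh wh \<longrightarrow>
            partially_strongly_submonotone Xi N M T uh wh)
       \<and> (inv_img T wh = {uh} \<longrightarrow>
            (strongly_submonotone N Xi T uh wh \<longleftrightarrow>
             partially_strongly_submonotone Xi N M T uh wh)
            \<and> common_proj Xi (\<lambda>x. M x - Xi x) (inv_img T wh) uh)"
proof (intro conjI impI)
  show "partially_strongly_submonotone Xi N M T uh wh"
    if "common_proj Xi (\<lambda>x. M x - Xi x) (inv_img T wh) uh"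
       "strongly_submonotone N Xi T uh wh"
    using part1[OF assms(4,5) that(1)] that(2) unfolding strongly_submonotone_def by blast
next
  assume A: "inv_img T wh = {uh}"
  show "common_proj Xi (\<lambda>x. M x - Xi x) (inv_img T wh) uh"
    unfolding A common_proj_def by (intro exI[of _ UNIV]) auto
  have eq: "\<And>u w. inner_op N (w - wh) (u - uh) + sqnorm_op (\<lambda>x. Xi x - Xi x) (u - uh)
         \<ge> sqnorm_op Xi (u - uh) \<longleftrightarrow>
        inner_op N (w - wh) (u - uh) + sqnorm_op (\<lambda>x. M x - Xi x) (u - uh)
         \<ge> sqnorm_op M (u - uh)"
    using sq_split[of M _ Xi] sq_zero[of Xi] by (metis add_le_cancel_right add.commute add_0)
  show "strongly_submonotone N Xi T uh wh \<longleftrightarrow> partially_strongly_submonotone Xi N M T uh wh"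
    unfolding strongly_submonotone_def partially_strongly_submonotone_def A dist2_single
    using eq by simp
qed

end
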